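(* Let $G$ be a connected undirected graph with positive edge weights, weighted adjacency matrix $\mathbf{A}$, degree matrix $\mathbf{D}$ (degrees $d_u$) and Laplacian $\mathbf{L}=\mathbf{D}-\mathbf{A}$, and let $\pi=\frac{\mathbf{D}\mathbf{1}}{\mathbf{1}^\top\mathbf{D}\mathbf{1}}$. For each vertex $u$ define $\sigma_u=\frac12\sum_{t=0}^\infty\left(\left(\frac12\mathbf{I}+\frac12\mathbf{A}\mathbf{D}^{-1}\right)^t\mathbf{1_u}-\pi\right)$. Let $\varepsilon>0$ and suppose vectors $\widetilde{\sigma}_u$ satisfy $\|\widetilde{\sigma}_u-\sigma_u\|_\infty\le\varepsilon/4$ for all $u$. Then for every edge $(u,v)$ of $G$, the quantity $$\frac{1}{d_u}(\widetilde{\sigma}_u)_u-\frac{1}{d_v}(\widetilde{\sigma}_u)_v+\frac{1}{d_v}(\widetilde{\sigma}_v)_v-\frac{1}{d_u}(\widetilde{\sigma}_v)_u$$ is a $(1+\varepsilon)$-approximation to the effective resistance $R(u,v)$.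
   Context: $R(u,v)=(\mathbf{1_u}-\mathbf{1_v})^\top\mathbf{L}^+(\mathbf{1_u}-\mathbf{1_v})$ with $\mathbf{L}^+$ the pseudoinverse. A $(1+\varepsilon)$-approximation $\widetilde R$ of $R$ satisfies $(1-\varepsilon)R\le\widetilde R\le(1+\varepsilon)R$. *)

theory Defs
  imports "HOL-Analysis.Analysis"
begin

definition pinv :: "real^'n^'m \<Rightarrow> real^'m^'n" where
  "pinv M = (THE X. M ** X ** M = M \<and> X ** M ** X = X \<and>
      transpose (M ** X) = M ** X \<and> transpose (X ** M) = X ** M)"

text \<open>Weighted graph on the finite vertex type 'n given by a weight function w;
  (u,v) is an edge iff w u v > 0.\<close>
definition adj_mat :: "('n::finite \<Rightarrow> 'n \<Rightarrow> real) \<Rightarrow> real^'n^'n" where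
  "adj_mat w = (\<chi> u v. w u v)"

definition deg :: "('n::finite \<Rightarrow> 'n \<Rightarrow> real) \<Rightarrow> 'n \<Rightarrow> real" where
  "deg w u = (\<Sum>v\<in>UNIV. w u v)"

definition deg_mat :: "('n::finite \<Rightarrow> 'n \<Rightarrow> real) \<Rightarrow> real^'n^'n" where
  "deg_mat w = (\<chi> u v. if u = v then deg w u else 0)"

definition lap :: "('n::finite \<Rightarrow> 'n \<Rightarrow> real) \<Rightarrow> real^'n^'n" where
  "lap w = deg_mat w - adj_mat w"

definition connected_graph :: "('n \<Rightarrow> 'n \<Rightarrow> real) \<Rightarrow> bool" where
  "connected_graph w \<longleftrightarrow> (\<forall>u v. (u, v) \<in> {(x, y). w x y > 0}\<^sup>*)"

definition eff_res :: "('n::finite \<Rightarrow> 'n \<Rightarrow> real) \<Rightarrow> 'n \<Rightarrow> 'n \<Rightarrow> real" where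
  "eff_res w u v = (axis u 1 - axis v 1) \<bullet> (pinv (lap w) *v (axis u 1 - axis v 1))"

definition stat_dist :: "('n::finite \<Rightarrow> 'n \<Rightarrow> real) \<Rightarrow> real^'n" where
  "stat_dist w = (1 / (1 \<bullet> (deg_mat w *v 1))) *\<^sub>R (deg_mat w *v 1)"

definition lazy_walk :: "('n::finite \<Rightarrow> 'n \<Rightarrow> real) \<Rightarrow> real^'n^'n" where
  "lazy_walk w = (1/2) *\<^sub>R mat 1 + (1/2) *\<^sub>R (adj_mat w ** matrix_inv (deg_mat w))"

definition sigma :: "('n::finite \<Rightarrow> 'n \<Rightarrow> real) \<Rightarrow> 'n \<Rightarrow> real^'n" where
  "sigma w u = (1/2) *\<^sub>R (\<Sum>t. ((\<lambda>x. lazy_walk w *v x) ^^ t) (axis u 1) - stat_dist w)"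

definition approx_factor :: "real \<Rightarrow> real \<Rightarrow> real \<Rightarrow> bool" where
  "approx_factor \<epsilon> Rt R \<longleftrightarrow> (1 - \<epsilon>) * R \<le> Rt \<and> Rt \<le> (1 + \<epsilon>) * R"

end

theory Submission
  imports Defs
begin


lemma sum_dl: "(\<Sum>k\<in>(UNIV::'n::finite set). (if i = k then a else 0) * f k) = (a::real) * f i"
proof -
  have *: "(\<lambda>k. (if i = k then a else 0) * f k) = (\<lambda>k. if i = k then a * f k else 0)" by auto
  show ?thesis unfolding * by simp
qed
lemma sum_dr: "(\<Sum>k\<in>(UNIV::'n::finite set). f k * (if k = j then b k else 0)) = (f j::real) * b j"
proof -
  have *: "(\<lambda>k. f k * (if k = j then b k else 0)) = (\<lambda>k. if k = j then f k * b k else 0)" by auto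
  show ?thesis unfolding * by simp
qed


locale gr =
  fixes w :: "'n::finite \<Rightarrow> 'n \<Rightarrow> real"
  assumes sym: "\<And>u v. w u v = w v u" and nonneg: "\<And>u v. w u v \<ge> 0"
    and noloop: "\<And>u. w u u = 0" and conn: "connected_graph w"
    and dpos: "\<And>u. deg w u > 0"
begin

definition Wm :: "'n \<Rightarrow> 'n \<Rightarrow> real" where
  "Wm i j = (if i = j then 1/2 else 0) + w i j / (2 * deg w j)"

lemma dne: "\<forall>i. deg w i \<noteq> 0" using dpos by (metis less_irrefl)

lemma dinv: "matrix_inv (deg_mat w) = (\<chi> i j. if i = j then 1 / deg w i else 0)"
proof -
  define B :: "real^'n^'n" where "B = (\<chi> i j. if i = j then 1 / deg w i else 0)"
  have h1: "deg_mat w ** B = mat 1" "B ** deg_mat w = mat 1"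
    using dpos by (simp_all add: dne B_def deg_mat_def matrix_matrix_mult_def mat_def vec_eq_iff sum_dl sum_dr)
  then have "\<exists>A'. deg_mat w ** A' = mat 1 \<and> A' ** deg_mat w = mat 1" by blast
  then have h2: "deg_mat w ** matrix_inv (deg_mat w) = mat 1 \<and> matrix_inv (deg_mat w) ** deg_mat w = mat 1"
    unfolding matrix_inv_def by (rule someI_ex)
  have "matrix_inv (deg_mat w) = matrix_inv (deg_mat w) ** (deg_mat w ** B)" using h1 by simp
  also have "\<dots> = B" using h2 by (simp add: matrix_mul_assoc)
  finally show ?thesis by (simp add: B_def)
qed

lemma W_entry: "lazy_walk w $ i $ j = Wm i j"
  by (simp add: lazy_walk_def dinv Wm_def adj_mat_def matrix_matrix_mult_def mat_def sum_dr)

lemma Wv: "(lazy_walk w *v x) $ i = (\<Sum>j\<in>UNIV. Wm i j * x $ j)"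
  by (simp add: matrix_vector_mult_def W_entry)

lemma Wm_nonneg: "Wm i j \<ge> 0"
  using nonneg[of i j] dpos[of j] by (simp add: Wm_def)

lemma Wm_diag: "Wm i i \<ge> 1/2"
  using noloop[of i] by (simp add: Wm_def)

lemma Wm_col: "(\<Sum>i\<in>UNIV. Wm i j) = 1"
proof -
  have "(\<Sum>i\<in>UNIV. w i j / (2 * deg w j)) = (\<Sum>i\<in>UNIV. w j i) / (2 * deg w j)"
    by (simp add: sum_divide_distrib sym)
  also have "\<dots> = 1/2" using dpos[of j] by (simp add: deg_def)
  finally show ?thesis by (simp add: Wm_def sum.distrib)
qed

lemma W_sum: "(\<Sum>i\<in>UNIV. (lazy_walk w *v x) $ i) = (\<Sum>i\<in>UNIV. x $ i)"
proof -
  have "(\<Sum>i\<in>UNIV. (lazy_walk w *v x) $ i) = (\<Sum>j\<in>UNIV. (\<Sum>i\<in>UNIV. Wm i j) * x $ j)"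
    unfolding Wv by (subst sum.swap) (simp add: sum_distrib_right)
  then show ?thesis by (simp add: Wm_col)
qed

definition volG :: real where "volG = (\<Sum>i\<in>UNIV. deg w i)"

lemma volG_pos: "volG > 0"
  unfolding volG_def using dpos by (simp add: sum_pos)

lemma pi_entry: "stat_dist w $ i = deg w i / volG"
  by (simp add: stat_dist_def deg_mat_def matrix_vector_mult_def volG_def inner_vec_def sum_dl)

lemma pi_sum: "(\<Sum>i\<in>UNIV. stat_dist w $ i) = 1"
  using volG_pos by (simp add: pi_entry sum_divide_distrib[symmetric] volG_def)

lemma W_pi: "lazy_walk w *v stat_dist w = stat_dist w"
proof -
  have "(lazy_walk w *v stat_dist w) $ i = stat_dist w $ i" for i
  proof -
    have "(lazy_walk w *v stat_dist w) $ i = (\<Sum>j\<in>UNIV. Wm i j * (deg w j / volG))"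
      by (simp add: Wv pi_entry)
    also have "\<dots> = (\<Sum>j\<in>UNIV. (if i = j then deg w j / (2 * volG) else 0) + w i j / (2 * volG))"
    proof (intro sum.cong refl)
      fix j show "Wm i j * (deg w j / volG) = (if i = j then deg w j / (2 * volG) else 0) + w i j / (2 * volG)"
        using dpos[of j] volG_pos noloop[of i] by (auto simp: Wm_def field_simps)
    qed
    also have "\<dots> = deg w i / (2 * volG) + deg w i / (2 * volG)"
      by (simp add: sum.distrib sum_divide_distrib[symmetric] deg_def)
    finally show ?thesis by (simp add: pi_entry)
  qed
  then show ?thesis by (simp add: vec_eq_iff)
qed

end



lemma l1_bound:
  fixes M :: "'n::finite \<Rightarrow> 'n \<Rightarrow> real"
  assumes "\<And>i j. M i j \<ge> 0" and "\<And>j. (\<Sum>i\<in>UNIV. M i j) \<le> s"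
  shows "(\<Sum>i\<in>UNIV. \<bar>\<Sum>j\<in>UNIV. M i j * x j\<bar>) \<le> s * (\<Sum>j\<in>UNIV. \<bar>x j\<bar>)"
proof -
  have "(\<Sum>i\<in>UNIV. \<bar>\<Sum>j\<in>UNIV. M i j * x j\<bar>) \<le> (\<Sum>i\<in>UNIV. \<Sum>j\<in>UNIV. M i j * \<bar>x j\<bar>)"
  proof (intro sum_mono)
    fix i
    have "\<bar>\<Sum>j\<in>UNIV. M i j * x j\<bar> \<le> (\<Sum>j\<in>UNIV. \<bar>M i j * x j\<bar>)" by (rule sum_abs)
    also have "\<dots> = (\<Sum>j\<in>UNIV. M i j * \<bar>x j\<bar>)" using assms(1) by (simp add: abs_mult)
    finally show "\<bar>\<Sum>j\<in>UNIV. M i j * x j\<bar> \<le> (\<Sum>j\<in>UNIV. M i j * \<bar>x j\<bar>)" .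
  qed
  also have "\<dots> = (\<Sum>j\<in>UNIV. (\<Sum>i\<in>UNIV. M i j) * \<bar>x j\<bar>)"
    by (subst sum.swap) (simp add: sum_distrib_right)
  also have "\<dots> \<le> (\<Sum>j\<in>UNIV. s * \<bar>x j\<bar>)"
    by (intro sum_mono mult_right_mono assms(2)) simp
  finally show ?thesis by (simp add: sum_distrib_left)
qed

context gr begin

abbreviation Wop :: "real^'n \<Rightarrow> real^'n" where "Wop \<equiv> (\<lambda>x. lazy_walk w *v x)"

definition it :: "nat \<Rightarrow> 'n \<Rightarrow> real^'n" where "it t j = (Wop ^^ t) (axis j 1)"

lemma it_0: "it 0 j $ i = (if i = j then 1 else 0)"
  by (simp add: it_def axis_def)

lemma it_Suc: "it (Suc t) j $ i = (\<Sum>k\<in>UNIV. Wm i k * it t j $ k)"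
  by (simp add: it_def Wv)

lemma it_nonneg: "it t j $ i \<ge> 0"
proof (induction t arbitrary: i)
  case 0 then show ?case by (simp add: it_0)
next
  case (Suc t) then show ?case by (simp add: it_Suc sum_nonneg Wm_nonneg)
qed

lemma it_ge_term: "it (Suc t) j $ i \<ge> Wm i k * it t j $ k"
proof -
  have "Wm i k * it t j $ k \<le> (\<Sum>k\<in>UNIV. Wm i k * it t j $ k)"
    by (rule member_le_sum) (auto intro: mult_nonneg_nonneg Wm_nonneg it_nonneg)
  then show ?thesis by (simp add: it_Suc)
qed

lemma it_pos_Suc: assumes a: "it t j $ i > 0" shows "it (Suc t) j $ i > 0"
proof -
  have "Wm i i > 0" using Wm_diag[of i] by linarith
  then have "Wm i i * it t j $ i > 0" using a by (rule mult_pos_pos)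
  then show ?thesis using it_ge_term[where t=t and j=j and i=i and k=i] by linarith
qed

lemma it_pos_mono: assumes a: "it t j $ i > 0" and b: "t \<le> t'" shows "it t' j $ i > 0"
  using b by (induction t' rule: dec_induct) (use a in \<open>auto intro: it_pos_Suc\<close>)

lemma it_pos_edge: "it t j $ k > 0 \<Longrightarrow> w i k > 0 \<Longrightarrow> it (Suc t) j $ i > 0"
proof -
  assume a: "it t j $ k > 0" "w i k > 0"
  have "Wm i k > 0" using a(2) dpos[of k] Wm_nonneg[of i k] noloop[of k]
    by (auto simp: Wm_def)
  then have "Wm i k * it t j $ k > 0" using a(1) by (rule mult_pos_pos)
  then show ?thesis using it_ge_term[where t=t and j=j and i=i and k=k] by linarith
qed

lemma reach: "(j, i) \<in> {(x, y). w x y > 0}\<^sup>* \<Longrightarrow> \<exists>t. it t j $ i > 0"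
proof (induction rule: rtrancl_induct)
  case base then show ?case by (rule exI[of _ 0]) (simp add: it_0)
next
  case (step k i)
  then obtain t where "it t j $ k > 0" by blast
  moreover have "w i k > 0" using step(2) sym by auto
  ultimately show ?case by (metis it_pos_edge)
qed

lemma uniform_pos: "\<exists>K>0. \<exists>\<delta>>0. \<forall>i j. it K j $ i \<ge> \<delta>"
proof -
  have "\<forall>p::'n\<times>'n. \<exists>t. it t (snd p) $ (fst p) > 0"
  proof
    fix p :: "'n\<times>'n"
    have "(snd p, fst p) \<in> {(x, y). w x y > 0}\<^sup>*" using conn unfolding connected_graph_def by blast
    then show "\<exists>t. it t (snd p) $ (fst p) > 0" by (rule reach)
  qed
  from choice[OF this] obtain T where T0: "\<forall>p. it (T p) (snd p) $ (fst p) > 0" by blast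
  have T: "\<And>p. it (T p) (snd p) $ (fst p) > 0" using T0 by blast
  define K where "K = Suc (\<Sum>p\<in>UNIV. T p)"
  have Kpos: "\<And>i j. it K j $ i > 0"
  proof -
    fix i j
    have "T (i, j) \<le> (\<Sum>p\<in>UNIV. T p)" by (rule member_le_sum) auto
    then have "T (i,j) \<le> K" by (simp add: K_def)
    then show "it K j $ i > 0" using it_pos_mono[OF T[of "(i,j)"]] by simp
  qed
  define \<delta> where "\<delta> = Min ((\<lambda>p. it K (snd p) $ (fst p)) ` UNIV)"
  have "\<delta> > 0" unfolding \<delta>_def using Kpos by (subst Min_gr_iff) auto
  moreover have "\<forall>i j. it K j $ i \<ge> \<delta>"
  proof (intro allI)
    fix i j show "it K j $ i \<ge> \<delta>" unfolding \<delta>_def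
      by (rule Min_le) (auto intro: image_eqI[where x="(i,j)"])
  qed
  ultimately show ?thesis unfolding K_def by blast
qed

lemma it_colsum: "(\<Sum>i\<in>UNIV. it t j $ i) = 1"
proof (induction t)
  case 0 then show ?case by (simp add: it_0)
next
  case (Suc t) then show ?case by (simp add: it_def W_sum)
qed

lemma it_lin: "(Wop ^^ t) x $ i = (\<Sum>j\<in>UNIV. x $ j * it t j $ i)"
proof (induction t arbitrary: i)
  case 0
  have "(\<Sum>j\<in>UNIV. x $ j * (if i = j then 1 else 0)) = (\<Sum>j\<in>UNIV. if j = i then x $ j else 0)"
    by (intro sum.cong) auto
  then show ?case by (simp add: it_0)
next
  case (Suc t)
  have "(Wop ^^ Suc t) x $ i = (\<Sum>k\<in>UNIV. Wm i k * (\<Sum>j\<in>UNIV. x $ j * it t j $ k))"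
    by (simp add: Wv Suc)
  also have "\<dots> = (\<Sum>k\<in>UNIV. \<Sum>j\<in>UNIV. Wm i k * (x $ j * it t j $ k))"
    by (simp add: sum_distrib_left)
  also have "\<dots> = (\<Sum>j\<in>UNIV. \<Sum>k\<in>UNIV. Wm i k * (x $ j * it t j $ k))"
    by (rule sum.swap)
  also have "\<dots> = (\<Sum>j\<in>UNIV. x $ j * (\<Sum>k\<in>UNIV. Wm i k * it t j $ k))"
    by (simp add: sum_distrib_left mult.left_commute)
  also have "\<dots> = (\<Sum>j\<in>UNIV. x $ j * it (Suc t) j $ i)" by (simp add: it_Suc)
  finally show ?case .
qed

lemma pow_sum: "(\<Sum>i\<in>UNIV. (Wop ^^ t) x $ i) = (\<Sum>i\<in>UNIV. x $ i)"
  by (induction t) (simp_all add: W_sum)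

lemma W_l1: "(\<Sum>i\<in>UNIV. \<bar>(Wop x) $ i\<bar>) \<le> (\<Sum>i\<in>UNIV. \<bar>x $ i\<bar>)"
  using l1_bound[of Wm 1 "\<lambda>j. x $ j"] by (simp add: Wv Wm_nonneg Wm_col)

lemma doeblin:
  assumes "K > 0" "\<delta> > 0" "\<And>i j. it K j $ i \<ge> \<delta>" "(\<Sum>i\<in>UNIV. x $ i) = 0"
  shows "(\<Sum>i\<in>UNIV. \<bar>(Wop ^^ K) x $ i\<bar>) \<le> (1 - real CARD('n) * \<delta>) * (\<Sum>i\<in>UNIV. \<bar>x $ i\<bar>)"
proof -
  have e: "(Wop ^^ K) x $ i = (\<Sum>j\<in>UNIV. (it K j $ i - \<delta>) * x $ j)" for i
  proof -
    have "(\<Sum>j\<in>UNIV. (it K j $ i - \<delta>) * x $ j) = (\<Sum>j\<in>UNIV. x $ j * it K j $ i) - \<delta> * (\<Sum>j\<in>UNIV. x $ j)"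
      by (simp add: algebra_simps sum_subtractf sum_distrib_left)
    then show ?thesis using assms(4) by (simp add: it_lin)
  qed
  have cs: "(\<Sum>i\<in>UNIV. it K j $ i - \<delta>) \<le> 1 - real CARD('n) * \<delta>" for j
    by (simp add: sum_subtractf it_colsum)
  have "(\<Sum>i\<in>UNIV. \<bar>\<Sum>j\<in>UNIV. (it K j $ i - \<delta>) * x $ j\<bar>) \<le> (1 - real CARD('n) * \<delta>) * (\<Sum>j\<in>UNIV. \<bar>x $ j\<bar>)"
    by (rule l1_bound[of "\<lambda>i j. it K j $ i - \<delta>" "1 - real CARD('n) * \<delta>" "\<lambda>j. x $ j", OF _ cs])
      (use assms(3) in \<open>simp add: algebra_simps\<close>)
  then show ?thesis by (simp add: e)
qed

end



lemma geom_div_summable: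
  fixes f :: "nat \<Rightarrow> real"
  assumes c: "0 < c" "c < 1" and K: "K > 0" and f0: "\<And>t. 0 \<le> f t" and f: "\<And>t. f t \<le> c ^ (t div K) * B"
  shows "summable f"
proof -
  define \<rho> where "\<rho> = root K c"
  have r0: "0 < \<rho>" unfolding \<rho>_def using c K by (simp add: real_root_gt_zero)
  have r1: "\<rho> < 1" unfolding \<rho>_def using c K by simp
  have rK: "\<rho> ^ K = c" unfolding \<rho>_def using c K by (simp add: real_root_pow_pos)
  have B: "B \<ge> 0" using f[of 0] f0[of 0] c by simp
  have b: "c ^ (t div K) \<le> \<rho> ^ t / c" for t
  proof -
    have "\<rho> ^ t = \<rho> ^ (K * (t div K)) * \<rho> ^ (t mod K)"
      by (simp add: power_add[symmetric])
    moreover have "\<rho> ^ K \<le> \<rho> ^ (t mod K)"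
      using r0 r1 K by (intro power_decreasing) (auto intro: less_imp_le)
    moreover have "\<rho> ^ (K * (t div K)) = c ^ (t div K)" by (simp add: power_mult rK)
    ultimately have "c ^ (t div K) * c \<le> \<rho> ^ t"
      using rK c by (simp add: mult_left_mono less_imp_le)
    then show ?thesis using c by (simp add: field_simps)
  qed
  have "summable (\<lambda>t. (B / c) * \<rho> ^ t)"
    using r0 r1 by (intro summable_mult summable_geometric) simp
  then show ?thesis
  proof (rule summable_comparison_test')
    fix t :: nat
    have "norm (f t) \<le> c ^ (t div K) * B" using f0[of t] f[of t] by simp
    also have "\<dots> \<le> (\<rho> ^ t / c) * B" using b B by (rule mult_right_mono)
    finally show "norm (f t) \<le> B / c * \<rho> ^ t" by (simp add: mult.commute)
  qed
qed


context gr begin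

lemma pow_pi: "(Wop ^^ t) (stat_dist w) = stat_dist w"
  by (induction t) (simp_all add: W_pi)

lemma pow_diff: "(Wop ^^ t) (a - b) = (Wop ^^ t) a - (Wop ^^ t) b"
  by (simp add: vec_eq_iff it_lin left_diff_distrib sum_subtractf)

definition yv :: "'n \<Rightarrow> nat \<Rightarrow> real^'n" where
  "yv u t = (Wop ^^ t) (axis u 1) - stat_dist w"

lemma yv_pow: "yv u t = (Wop ^^ t) (axis u 1 - stat_dist w)"
  by (simp add: yv_def pow_diff pow_pi)

lemma x0_sum: "(\<Sum>i\<in>UNIV. (axis u 1 - stat_dist w) $ i) = 0"
proof -
  have a: "(\<Sum>i\<in>UNIV. axis u (1::real) $ i) = 1"
    by (simp add: axis_def)
  have "(\<Sum>i\<in>UNIV. (axis u 1 - stat_dist w) $ i) = (\<Sum>i\<in>UNIV. axis u (1::real) $ i) - (\<Sum>i\<in>UNIV. stat_dist w $ i)"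
    unfolding vector_minus_component by (rule sum_subtractf)
  then show ?thesis using a pi_sum by simp
qed

definition gv :: "'n \<Rightarrow> nat \<Rightarrow> real" where
  "gv u t = (\<Sum>i\<in>UNIV. \<bar>yv u t $ i\<bar>)"

lemma gv_Suc: "gv u (Suc t) \<le> gv u t"
  unfolding gv_def yv_pow using W_l1 by simp

lemma gv_mono: "t \<le> t' \<Longrightarrow> gv u t' \<le> gv u t"
  by (induction t' rule: dec_induct) (auto intro: order_trans[OF gv_Suc])

lemma gv_K:
  assumes "K > 0" "\<delta> > 0" "\<And>i j. it K j $ i \<ge> \<delta>"
  shows "gv u (t + K) \<le> (1 - real CARD('n) * \<delta>) * gv u t"
proof -
  have "yv u (t + K) = (Wop ^^ K) (yv u t)"
    by (simp add: yv_pow funpow_add add.commute)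
  moreover have "(\<Sum>i\<in>UNIV. yv u t $ i) = 0"
    unfolding yv_pow pow_sum by (rule x0_sum)
  ultimately show ?thesis unfolding gv_def using doeblin[OF assms] by simp
qed

lemma summable_yv: "summable (yv u)"
proof -
  obtain K \<delta> where K: "K > 0" and d: "\<delta> > 0" and kd: "\<And>i j. it K j $ i \<ge> \<delta>"
    using uniform_pos by blast
  define c where "c = max (1 - real CARD('n) * \<delta>) (1/2)"
  have c0: "0 < c" "c < 1" unfolding c_def using d by auto
  have gK: "gv u (t + K) \<le> c * gv u t" for t
  proof -
    have "gv u t \<ge> 0" unfolding gv_def by (simp add: sum_nonneg)
    then have "(1 - real CARD('n) * \<delta>) * gv u t \<le> c * gv u t"
      unfolding c_def by (intro mult_right_mono) auto
    then show ?thesis using gv_K[OF K d kd, of u t] by linarith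
  qed
  have gb: "gv u t \<le> c ^ (t div K) * gv u 0" for t
  proof (induction t rule: less_induct)
    case (less t)
    show ?case
    proof (cases "t < K")
      case True
      then show ?thesis using gv_mono[of 0 t u] by simp
    next
      case False
      then obtain t' where t': "t = t' + K" by (metis add.commute le_Suc_ex not_less)
      have "t' < t" using t' K by simp
      have "gv u t \<le> c * gv u t'" using gK t' by simp
      also have "\<dots> \<le> c * (c ^ (t' div K) * gv u 0)"
        using less[OF \<open>t' < t\<close>] c0 by (intro mult_left_mono) auto
      also have "\<dots> = c ^ (t div K) * gv u 0"
        using t' K by simp
      finally show ?thesis .
    qed
  qed
  have "summable (gv u)"
    by (rule geom_div_summable[OF c0 K _ gb]) (simp add: gv_def sum_nonneg)
  then show ?thesis
  proof (rule summable_comparison_test')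
    fix t :: nat
    show "norm (yv u t) \<le> gv u t" unfolding gv_def by (rule norm_le_l1_cart)
  qed
qed

lemma sigma_fix: "sigma w u - Wop (sigma w u) = (1/2) *\<^sub>R (axis u 1 - stat_dist w)"
proof -
  define s where "s = suminf (yv u)"
  have sig: "sigma w u = (1/2) *\<^sub>R s" unfolding s_def sigma_def yv_def by simp
  have "Wop s = (\<Sum>t. Wop (yv u t))" unfolding s_def
    by (rule bounded_linear.suminf[OF matrix_vector_mul_bounded_linear summable_yv])
  also have "\<dots> = (\<Sum>t. yv u (Suc t))"
    by (simp add: yv_pow)
  also have "\<dots> = s - yv u 0" unfolding s_def by (rule suminf_split_head[OF summable_yv])
  finally have "s - Wop s = yv u 0" by simp
  then show ?thesis unfolding sig by (simp add: yv_def matrix_vector_mult_scaleR scaleR_diff_right[symmetric])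
qed

end



lemma mdiff_l: "(A::real^'n::finite^'m) ** (B - C) = A ** B - A ** C"
  by (simp add: matrix_matrix_mult_def vec_eq_iff sum_subtractf right_diff_distrib)
lemma mdiff_r: "((A::real^'n::finite^'m) - B) ** C = A ** C - B ** C"
  by (simp add: matrix_matrix_mult_def vec_eq_iff sum_subtractf left_diff_distrib)
lemma madd_r: "((A::real^'n::finite^'m) + B) ** C = A ** C + B ** C"
  by (simp add: matrix_matrix_mult_def vec_eq_iff sum.distrib distrib_right)

context gr begin

lemma lap_v: "(lap w *v z) $ i = deg w i * z $ i - (\<Sum>j\<in>UNIV. w i j * z $ j)"
  by (simp add: lap_def deg_mat_def adj_mat_def matrix_vector_mult_def sum_subtractf
      left_diff_distrib sum_dl)

lemma lap_sym: "transpose (lap w) = lap w"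
  by (simp add: lap_def deg_mat_def adj_mat_def transpose_def vec_eq_iff sym)

lemma lap_inner_sym: "a \<bullet> (lap w *v b) = b \<bullet> (lap w *v a)"
proof -
  have "a \<bullet> (lap w *v b) = (a v* lap w) \<bullet> b" by (simp add: dot_lmul_matrix)
  also have "a v* lap w = lap w *v a"
    by (metis lap_sym transpose_matrix_vector)
  finally show ?thesis by (simp add: inner_commute)
qed

lemma quad: "z \<bullet> (lap w *v z) = (1/2) * (\<Sum>i\<in>UNIV. \<Sum>j\<in>UNIV. w i j * (z $ i - z $ j)^2)"
proof -
  define S where "S = (\<Sum>i\<in>UNIV. \<Sum>j\<in>UNIV. w i j * (z $ i * (z $ i - z $ j)))"
  have "z \<bullet> (lap w *v z) = (\<Sum>i\<in>UNIV. z $ i * (deg w i * z $ i - (\<Sum>j\<in>UNIV. w i j * z $ j)))"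
    by (simp add: inner_vec_def lap_v)
  also have "\<dots> = S"
    unfolding S_def deg_def
    by (intro sum.cong refl)
       (simp add: sum_distrib_left sum_distrib_right sum_subtractf[symmetric] algebra_simps)
  finally have e1: "z \<bullet> (lap w *v z) = S" .
  have "S = (\<Sum>j\<in>UNIV. \<Sum>i\<in>UNIV. w i j * (z $ i * (z $ i - z $ j)))"
    unfolding S_def by (rule sum.swap)
  also have "\<dots> = (\<Sum>i\<in>UNIV. \<Sum>j\<in>UNIV. w i j * (z $ j * (z $ j - z $ i)))"
    by (simp add: sym)
  finally have e2: "S = \<dots>" .
  have "2 * S = (\<Sum>i\<in>UNIV. \<Sum>j\<in>UNIV. w i j * (z $ i - z $ j)^2)"
    unfolding mult_2
    apply (subst (2) e2)
    unfolding S_def sum.distrib[symmetric]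
    by (intro sum.cong refl) (simp add: power2_eq_square algebra_simps)
  then show ?thesis using e1 by simp
qed

lemma quad_nonneg: "z \<bullet> (lap w *v z) \<ge> 0"
  unfolding quad by (intro mult_nonneg_nonneg sum_nonneg) (auto intro: mult_nonneg_nonneg nonneg)

lemma quad_zero_const:
  assumes "z \<bullet> (lap w *v z) = 0" shows "z $ a = z $ b"
proof -
  have "(\<Sum>i\<in>UNIV. \<Sum>j\<in>UNIV. w i j * (z $ i - z $ j)^2) = 0" using assms quad by simp
  then have h: "\<And>i j. w i j * (z $ i - z $ j)^2 = 0"
    by (subst (asm) sum_nonneg_eq_0_iff) (auto simp: sum_nonneg nonneg sum_nonneg_eq_0_iff)
  have "(a, b) \<in> {(x, y). w x y > 0}\<^sup>*" using conn unfolding connected_graph_def by blast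
  then show ?thesis
  proof (induction rule: rtrancl_induct)
    case base then show ?case by simp
  next
    case (step y c)
    then have "w y c > 0" by simp
    then have "z $ y = z $ c" using h[of y c] by simp
    then show ?case using step by simp
  qed
qed

definition Jm :: "real^'n^'n" where "Jm = (\<chi> i j. 1)"
definition nn :: real where "nn = real CARD('n)"
definition Mm :: "real^'n^'n" where "Mm = lap w + (1/nn) *\<^sub>R Jm"

lemma nn_pos: "nn > 0" by (simp add: nn_def)

lemma Jm_v: "(Jm *v x) $ i = (\<Sum>j\<in>UNIV. x $ j)"
  by (simp add: Jm_def matrix_vector_mult_def)

lemma Mm_ker: "Mm *v x = 0 \<Longrightarrow> x = 0"
proof -
  assume a: "Mm *v x = 0"
  have "x \<bullet> (Mm *v x) = x \<bullet> (lap w *v x) + (1/nn) * (x \<bullet> (Jm *v x))"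
    by (simp add: Mm_def matrix_vector_mult_add_rdistrib inner_add_right
        scaleR_matrix_vector_assoc[symmetric])
  moreover have "x \<bullet> (Jm *v x) = (\<Sum>j\<in>UNIV. x $ j)^2"
    by (simp add: inner_vec_def Jm_v power2_eq_square sum_distrib_right mult.commute)
  ultimately have e: "0 = x \<bullet> (lap w *v x) + (1/nn) * (\<Sum>j\<in>UNIV. x $ j)^2" using a by simp
  have q: "x \<bullet> (lap w *v x) \<ge> 0" by (rule quad_nonneg)
  have r: "(1/nn) * (\<Sum>j\<in>UNIV. x $ j)^2 \<ge> 0" using nn_pos by simp
  have q0: "x \<bullet> (lap w *v x) = 0" using e q r by linarith
  have "(1/nn) * (\<Sum>j\<in>UNIV. x $ j)^2 = 0" using e q r by linarith
  then have s0: "(\<Sum>j\<in>UNIV. x $ j) = 0" using nn_pos by simp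
  fix a :: 'n
  have "\<And>j. x $ j = x $ a" using quad_zero_const[OF q0] by blast
  then have "(\<Sum>j\<in>UNIV. x $ j) = (\<Sum>j\<in>(UNIV::'n set). x $ a)" by (intro sum.cong) auto
  then have "(\<Sum>j\<in>UNIV. x $ j) = nn * x $ a" by (simp add: nn_def)
  then have "x $ a = 0" using s0 nn_pos by simp
  then show "x = 0" using \<open>\<And>j. x $ j = x $ a\<close> by (simp add: vec_eq_iff)
qed

end



lemma penrose_unique:
  fixes A :: "real^'n^'m" and X Y :: "real^'m^'n"
  assumes x1: "A ** X ** A = A" and x2: "X ** A ** X = X"
    and x3: "transpose (A ** X) = A ** X" and x4: "transpose (X ** A) = X ** A"
    and y1: "A ** Y ** A = A" and y2: "Y ** A ** Y = Y"
    and y3: "transpose (A ** Y) = A ** Y" and y4: "transpose (Y ** A) = Y ** A"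
  shows "X = Y"
proof -
  have "X = X ** (A ** X)" using x2 by (simp add: matrix_mul_assoc)
  also have "\<dots> = X ** transpose (A ** X)" using x3 by simp
  also have "\<dots> = X ** (transpose X ** transpose A)" by (simp add: matrix_transpose_mul)
  also have "\<dots> = X ** (transpose X ** transpose (A ** Y ** A))" using y1 by simp
  also have "\<dots> = X ** (transpose X ** transpose A) ** (transpose (A ** Y))"
    by (simp add: matrix_transpose_mul matrix_mul_assoc)
  also have "\<dots> = X ** transpose (A ** X) ** (A ** Y)"
    using y3 by (simp add: matrix_transpose_mul)
  also have "\<dots> = X ** A ** X ** A ** Y" using x3 by (simp add: matrix_mul_assoc)
  also have "\<dots> = X ** A ** Y" using x2 by simp
  finally have hx: "X = X ** A ** Y" .
  have "Y = (Y ** A) ** Y" using y2 by (simp add: matrix_mul_assoc)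
  also have "\<dots> = transpose (Y ** A) ** Y" using y4 by simp
  also have "\<dots> = (transpose A ** transpose Y) ** Y" by (simp add: matrix_transpose_mul)
  also have "\<dots> = (transpose (A ** X ** A) ** transpose Y) ** Y" using x1 by simp
  also have "\<dots> = transpose (X ** A) ** (transpose A ** transpose Y) ** Y"
    by (simp add: matrix_transpose_mul matrix_mul_assoc)
  also have "\<dots> = (X ** A) ** transpose (Y ** A) ** Y"
    using x4 by (simp add: matrix_transpose_mul)
  also have "\<dots> = X ** A ** (Y ** A ** Y)" using y4 by (simp add: matrix_mul_assoc)
  also have "\<dots> = X ** A ** Y" using y2 by simp
  finally show ?thesis using hx by simp
qed


context gr begin

lemma Jm_T: "transpose Jm = Jm" by (simp add: transpose_def Jm_def vec_eq_iff)

lemma LJ: "lap w ** Jm = 0"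
proof -
  have "(lap w ** Jm) $ i $ j = 0" for i j
  proof -
    have "(lap w ** Jm) $ i $ j = (lap w *v 1) $ i"
      by (simp add: matrix_matrix_mult_def matrix_vector_mult_def Jm_def)
    also have "\<dots> = 0" by (simp add: lap_v deg_def)
    finally show ?thesis .
  qed
  then show ?thesis by (simp add: vec_eq_iff)
qed

lemma JL: "Jm ** lap w = 0"
proof -
  have "transpose (Jm ** lap w) = 0"
    by (simp add: matrix_transpose_mul lap_sym Jm_T LJ)
  then show ?thesis by (metis transpose_transpose transpose_iff times0_left matrix_transpose_mul Jm_T lap_sym LJ)
qed

lemma JJ: "Jm ** Jm = nn *\<^sub>R Jm"
  by (simp add: matrix_matrix_mult_def Jm_def nn_def vec_eq_iff)

lemma Mm_inv: "\<exists>Mi. Mm ** Mi = mat 1 \<and> Mi ** Mm = mat 1"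
proof -
  have "\<exists>B. B ** Mm = mat 1" using Mm_ker matrix_left_invertible_ker by blast
  then show ?thesis using matrix_left_right_inverse by blast
qed

definition X0 :: "real^'n^'n" where "X0 = matrix_inv Mm - (1/nn) *\<^sub>R Jm"

lemma X0_props:
  "lap w ** X0 ** lap w = lap w \<and> X0 ** lap w ** X0 = X0 \<and>
   transpose (lap w ** X0) = lap w ** X0 \<and> transpose (X0 ** lap w) = X0 ** lap w"
proof -
  define Mi where "Mi = matrix_inv Mm"
  define c where "c = 1/nn"
  have Mi: "Mm ** Mi = mat 1" "Mi ** Mm = mat 1"
    using someI_ex[OF Mm_inv] unfolding Mi_def matrix_inv_def by auto
  have L: "lap w = Mm - c *\<^sub>R Jm" by (simp add: Mm_def c_def)
  have cn: "c * nn = 1" using nn_pos by (simp add: c_def)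
  have MJ: "Mm ** Jm = Jm"
    by (simp add: Mm_def madd_r LJ scalar_matrix_assoc[symmetric] JJ less_imp_neq[OF nn_pos, symmetric])
  have JM: "Jm ** Mm = Jm"
    by (simp add: Mm_def matrix_add_ldistrib JL matrix_scalar_ac scalar_matrix_assoc[symmetric] JJ less_imp_neq[OF nn_pos, symmetric])
  have MiJ: "Mi ** Jm = Jm" by (metis MJ Mi(2) matrix_mul_assoc matrix_mul_lid)
  have JMi: "Jm ** Mi = Jm" by (metis JM Mi(1) matrix_mul_assoc matrix_mul_rid)
  define P where "P = mat 1 - c *\<^sub>R Jm"
  have X0: "X0 = Mi - c *\<^sub>R Jm" by (simp add: X0_def Mi_def c_def)
  have LX: "lap w ** X0 = P"
  proof -
    have "lap w ** X0 = lap w ** Mi" by (simp add: X0 mdiff_l matrix_scalar_ac scalar_matrix_assoc[symmetric] LJ)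
    also have "\<dots> = P" by (simp add: L mdiff_r scalar_matrix_assoc[symmetric] JMi Mi P_def)
    finally show ?thesis .
  qed
  have XL: "X0 ** lap w = P"
  proof -
    have "X0 ** lap w = Mi ** lap w" by (simp add: X0 mdiff_r scalar_matrix_assoc[symmetric] JL)
    also have "\<dots> = P" by (simp add: L mdiff_l matrix_scalar_ac scalar_matrix_assoc[symmetric] MiJ Mi P_def)
    finally show ?thesis .
  qed
  have PT: "transpose P = P" by (simp add: P_def transpose_def Jm_def mat_def vec_eq_iff)
  have PL: "P ** lap w = lap w" by (simp add: P_def mdiff_r scalar_matrix_assoc[symmetric] JL)
  have JX: "Jm ** X0 = 0"
    by (simp add: X0 mdiff_l matrix_scalar_ac scalar_matrix_assoc[symmetric] JMi JJ cn)
  have PX: "P ** X0 = X0" by (simp add: P_def mdiff_r scalar_matrix_assoc[symmetric] JX)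
  show ?thesis by (simp add: LX XL PT PL PX)
qed

lemma pinv_lap: "pinv (lap w) = X0"
  unfolding pinv_def
proof (rule the1_equality)
  show "\<exists>!X. lap w ** X ** lap w = lap w \<and> X ** lap w ** X = X \<and>
      transpose (lap w ** X) = lap w ** X \<and> transpose (X ** lap w) = X ** lap w"
    using X0_props penrose_unique by blast
qed (rule X0_props)

end



context gr begin

definition zv :: "'n \<Rightarrow> real^'n" where "zv x = (\<chi> i. sigma w x $ i / deg w i)"

lemma Lzv: "lap w *v zv x = axis x 1 - stat_dist w"
proof -
  have "(lap w *v zv x) $ i = (axis x 1 - stat_dist w) $ i" for i
  proof -
    let ?s = "sigma w x"
    have f: "?s $ i - (\<Sum>j\<in>UNIV. Wm i j * ?s $ j) = (1/2) * (axis x 1 - stat_dist w) $ i"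
      using arg_cong[OF sigma_fix[of x], of "\<lambda>v. v $ i"] by (simp add: Wv)
    have "(\<Sum>j\<in>UNIV. Wm i j * ?s $ j) = (\<Sum>j\<in>UNIV. (if i = j then ?s $ j / 2 else 0) + (w i j * (?s $ j / deg w j)) / 2)"
      by (intro sum.cong refl) (simp add: Wm_def field_simps)
    also have "\<dots> = ?s $ i / 2 + (\<Sum>j\<in>UNIV. w i j * (?s $ j / deg w j)) / 2"
      unfolding sum.distrib sum_divide_distrib[symmetric] by simp
    finally have g: "(\<Sum>j\<in>UNIV. Wm i j * ?s $ j) = \<dots>" .
    have "(lap w *v zv x) $ i = ?s $ i - (\<Sum>j\<in>UNIV. w i j * (?s $ j / deg w j))"
      using dpos[of i] by (simp add: lap_v zv_def)
    also have "\<dots> = (axis x 1 - stat_dist w) $ i" using f g by simp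
    finally show ?thesis .
  qed
  then show ?thesis by (simp add: vec_eq_iff)
qed

lemma qexp: "(a - t *\<^sub>R z) \<bullet> (lap w *v (a - t *\<^sub>R z)) =
   a \<bullet> (lap w *v a) - 2 * t * (a \<bullet> (lap w *v z)) + t^2 * (z \<bullet> (lap w *v z))"
proof -
  have "z \<bullet> (lap w *v a) = a \<bullet> (lap w *v z)" by (rule lap_inner_sym)
  then show ?thesis
    by (simp add: matrix_vector_mult_diff_distrib matrix_scaleR_vector_ac scaleR_matrix_vector_assoc[symmetric]
        inner_diff_left inner_diff_right power2_eq_square algebra_simps)
qed

lemma final:
  assumes eps: "\<epsilon> > 0"
    and approx: "\<And>u. infnorm (\<sigma>t u - sigma w u) \<le> \<epsilon> / 4"
    and edge: "w u v > 0"
  shows "approx_factor \<epsilon>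
           ((\<sigma>t u $ u) / deg w u - (\<sigma>t u $ v) / deg w v
            + (\<sigma>t v $ v) / deg w v - (\<sigma>t v $ u) / deg w u)
           (eff_res w u v)"
proof -
  have uv: "u \<noteq> v" using edge noloop by auto
  define z where "z = zv u - zv v"
  define b :: "real^'n" where "b = axis u 1 - axis v 1"
  have Lz: "lap w *v z = b" by (simp add: z_def b_def matrix_vector_mult_diff_distrib Lzv)
  define R where "R = eff_res w u v"
  have R1: "R = z \<bullet> (lap w *v z)"
  proof -
    define y where "y = X0 *v (lap w *v z)"
    have "R = (lap w *v z) \<bullet> y" by (simp add: R_def eff_res_def pinv_lap Lz y_def b_def)
    also have "\<dots> = y \<bullet> (lap w *v z)" by (rule inner_commute)
    also have "\<dots> = z \<bullet> (lap w *v y)" by (rule lap_inner_sym)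
    also have "lap w *v y = lap w *v z"
      using X0_props by (simp add: y_def matrix_vector_mul_assoc matrix_mul_assoc)
    finally show ?thesis .
  qed
  have Rz: "R = z $ u - z $ v" using R1 by (simp add: Lz b_def inner_diff_right inner_axis)
  have du: "deg w u > 0" and dv: "deg w v > 0" using dpos by auto
  have bu: "b $ u = 1" and bv: "b $ v = -1" using uv by (simp_all add: b_def axis_def)
  have Lax0: "(lap w *v axis a 1) $ a = deg w a" for a
    by (simp add: lap_v axis_def noloop sum_dr)
  have Lax: "axis a 1 \<bullet> (lap w *v axis a 1) = deg w a" for a
    by (simp only: inner_axis' Lax0) simp
  have lower: "R * deg w a \<ge> 1" if s: "s^2 = 1" and bs: "b $ a = s" for a s
  proof -
    have "0 \<le> (axis a 1 - (deg w a * s) *\<^sub>R z) \<bullet> (lap w *v (axis a 1 - (deg w a * s) *\<^sub>R z))"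
      by (rule quad_nonneg)
    also have "\<dots> = deg w a - 2 * (deg w a * s) * s + (deg w a * s)^2 * R"
      using R1 by (simp add: qexp Lax0 Lz inner_axis' bs)
    also have "\<dots> = deg w a - 2 * deg w a * (s * s) + deg w a * deg w a * (s * s) * R"
      by (simp add: power2_eq_square algebra_simps)
    also have "\<dots> = deg w a * (R * deg w a - 1)"
      using s by (simp add: power2_eq_square algebra_simps)
    finally have "0 \<le> deg w a * (R * deg w a - 1)" .
    then show ?thesis using dpos[of a] by (simp add: zero_le_mult_iff)
  qed
  have Ru: "R * deg w u \<ge> 1" using lower[of 1 u] bu by simp
  have Rv: "R * deg w v \<ge> 1" using lower[of "-1" v] bv by simp
  define eu where "eu = \<sigma>t u - sigma w u"
  define ev where "ev = \<sigma>t v - sigma w v"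
  have ebd: "\<bar>eu $ k\<bar> \<le> \<epsilon>/4" "\<bar>ev $ k\<bar> \<le> \<epsilon>/4" for k
    using component_le_infnorm_cart[of eu k] component_le_infnorm_cart[of ev k] approx[of u] approx[of v]
    by (auto simp: eu_def ev_def)
  define Qt where "Qt = (\<sigma>t u $ u) / deg w u - (\<sigma>t u $ v) / deg w v
            + (\<sigma>t v $ v) / deg w v - (\<sigma>t v $ u) / deg w u"
  have QtR: "Qt - R = (eu $ u - ev $ u) / deg w u - (eu $ v - ev $ v) / deg w v"
    unfolding Qt_def Rz z_def eu_def ev_def zv_def by (simp add: diff_divide_distrib)
  have dd: "\<bar>(eu $ a - ev $ a) / deg w a\<bar> \<le> (\<epsilon>/2) / deg w a" for a
  proof -
    have "\<bar>eu $ a - ev $ a\<bar> \<le> \<epsilon>/2"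
      using abs_triangle_ineq4[of "eu $ a" "ev $ a"] ebd[of a] by linarith
    then have "\<bar>eu $ a - ev $ a\<bar> / deg w a \<le> (\<epsilon>/2) / deg w a"
      by (rule divide_right_mono) (use dpos[of a] in linarith)
    then show ?thesis using dpos[of a] by (simp add: abs_divide)
  qed
  have ee: "(\<epsilon>/2) / deg w a \<le> \<epsilon> * R / 2" if "R * deg w a \<ge> 1" for a
  proof -
    have "1 / deg w a \<le> R" using that dpos[of a] by (simp add: pos_divide_le_eq)
    then have "(\<epsilon>/2) * (1 / deg w a) \<le> (\<epsilon>/2) * R"
      by (rule mult_left_mono) (use eps in linarith)
    then show ?thesis by simp
  qed
  have d1: "\<bar>(eu $ u - ev $ u) / deg w u\<bar> \<le> (\<epsilon>/2) / deg w u" by (rule dd)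
  have d2: "\<bar>(eu $ v - ev $ v) / deg w v\<bar> \<le> (\<epsilon>/2) / deg w v" by (rule dd)
  have e1: "(\<epsilon>/2) / deg w u \<le> \<epsilon> * R / 2" by (rule ee[OF Ru])
  have e2: "(\<epsilon>/2) / deg w v \<le> \<epsilon> * R / 2" by (rule ee[OF Rv])
  have t: "\<bar>Qt - R\<bar> \<le> \<bar>(eu $ u - ev $ u) / deg w u\<bar> + \<bar>(eu $ v - ev $ v) / deg w v\<bar>"
    unfolding QtR by (rule abs_triangle_ineq4)
  have ab: "\<bar>Qt - R\<bar> \<le> \<epsilon> * R" using t d1 d2 e1 e2 by linarith
  have a1: "Qt - R \<le> \<epsilon> * R" using ab abs_ge_self[of "Qt - R"] by linarith
  have a2: "R - Qt \<le> \<epsilon> * R" using ab abs_ge_minus_self[of "Qt - R"] by linarith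
  have m1: "(1 - \<epsilon>) * R = R - \<epsilon> * R" by (simp add: left_diff_distrib)
  have m2: "(1 + \<epsilon>) * R = R + \<epsilon> * R" by (simp add: distrib_right)
  have "(1 - \<epsilon>) * R \<le> Qt \<and> Qt \<le> (1 + \<epsilon>) * R" unfolding m1 m2 using a1 a2 by linarith
  then show ?thesis unfolding approx_factor_def Qt_def R_def .
qed

end


theorem lemma3p4:
  fixes w :: "'n::finite \<Rightarrow> 'n \<Rightarrow> real"
    and \<epsilon> :: real
    and \<sigma>t :: "'n \<Rightarrow> real^'n"
  assumes sym: "\<And>u v. w u v = w v u"
    and nonneg: "\<And>u v. w u v \<ge> 0"
    and noloop: "\<And>u. w u u = 0"
    and conn: "connected_graph w"
    and eps: "\<epsilon> > 0"
    and approx: "\<And>u. infnorm (\<sigma>t u - sigma w u) \<le> \<epsilon> / 4"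
    and edge: "w u v > 0"
  shows "approx_factor \<epsilon>
           ((\<sigma>t u $ u) / deg w u - (\<sigma>t u $ v) / deg w v
            + (\<sigma>t v $ v) / deg w v - (\<sigma>t v $ u) / deg w u)
           (eff_res w u v)"
proof -
  have uv: "u \<noteq> v" using edge noloop by auto
  have dpos: "deg w j > 0" for j
  proof -
    define k where "k = (if j = u then v else u)"
    have kj: "j \<noteq> k" using uv by (auto simp: k_def)
    have "(j, k) \<in> {(x,y). w x y > 0}\<^sup>*" using conn unfolding connected_graph_def by blast
    then obtain y where y: "w j y > 0" using kj by (cases rule: converse_rtranclE) auto
    have "w j y \<le> (\<Sum>y'\<in>UNIV. w j y')" by (rule member_le_sum) (auto intro: nonneg)
    then show ?thesis using y by (simp add: deg_def)
  qed
  interpret G: gr w using sym nonneg noloop conn dpos by unfold_locales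
  show ?thesis by (rule G.final[OF eps approx edge])
qed

end
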